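(* Let $G$ be a graph on $n$ vertices, where $n=20$ or $n=21$, with exactly $2n-1$ edges and maximum vertex degree at most four. Then $\mathcal{E}(G)<2(n-1)$.
   Context: All graphs are finite, simple and undirected. The energy $\mathcal{E}(G)$ of a graph $G$ is the sum of the absolute values of the eigenvalues of its adjacency matrix. *)

theory Defs
  imports "Jordan_Normal_Form.Char_Poly"
begin

definition simple_graph :: "nat \<Rightarrow> (nat \<Rightarrow> nat \<Rightarrow> bool) \<Rightarrow> bool" where
  "simple_graph n E \<longleftrightarrow>
     (\<forall>i<n. \<forall>j<n. E i j \<longrightarrow> E j i) \<and> (\<forall>i<n. \<not> E i i)"

definition graph_edges :: "nat \<Rightarrow> (nat \<Rightarrow> nat \<Rightarrow> bool) \<Rightarrow> nat set set" where
  "graph_edges n E = {{i, j} | i j. i < n \<and> j < n \<and> E i j}"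

definition degree :: "nat \<Rightarrow> (nat \<Rightarrow> nat \<Rightarrow> bool) \<Rightarrow> nat \<Rightarrow> nat" where
  "degree n E i = card {j. j < n \<and> E i j}"

definition adj_matrix :: "nat \<Rightarrow> (nat \<Rightarrow> nat \<Rightarrow> bool) \<Rightarrow> real mat" where
  "adj_matrix n E = mat n n (\<lambda>(i, j). if E i j then 1 else 0)"

definition graph_energy :: "nat \<Rightarrow> (nat \<Rightarrow> nat \<Rightarrow> bool) \<Rightarrow> real" where
  "graph_energy n E =
     (let p = char_poly (map_mat complex_of_real (adj_matrix n E)) in
      \<Sum>z\<in>{z. poly p z = 0}. real (order z p) * cmod z)"

end

theory Submission
  imports Defs "Jordan_Normal_Form.Schur_Decomposition"
begin


lemma order_prod_linear:
  fixes as :: "complex list"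
  shows "Polynomial.order z (\<Prod>a\<leftarrow>as. [:- a, 1:]) = count_list as z"
proof (induction as)
  case Nil then show ?case by simp
next
  case (Cons a as)
  have nz: "(\<Prod>a\<leftarrow>as. [:- a, 1:]) \<noteq> 0"
    by (auto simp: prod_list_zero_iff)
  have nz2: "[:- a, 1:] * (\<Prod>a\<leftarrow>as. [:- a, 1:]) \<noteq> 0"
    using nz by (metis mult_eq_0_iff one_neq_zero pCons_eq_0_iff)
  have "Polynomial.order z ([:- a, 1:] * (\<Prod>a\<leftarrow>as. [:- a, 1:])) = Polynomial.order z [:- a, 1:] + Polynomial.order z (\<Prod>a\<leftarrow>as. [:- a, 1:])"
    by (rule order_mult[OF nz2])
  then show ?case using Cons order_linear'[of z "-a"] by auto
qed

lemma roots_prod_linear: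
  fixes as :: "complex list"
  shows "{z. poly (\<Prod>a\<leftarrow>as. [:- a, 1:]) z = 0} = set as"
  by (induction as) auto

lemma sum_list_count_gen:
  fixes f :: "'a \<Rightarrow> real"
  shows "sum_list (map f xs) = (\<Sum>x\<in>set xs. real (count_list xs x) * f x)"
proof (induction xs)
  case (Cons x xs)
  show ?case
  proof (cases "x \<in> set xs")
    case True
    have "sum_list (map f (x # xs)) = f x + (\<Sum>y\<in>set xs. real (count_list xs y) * f y)"
      by (simp add: Cons.IH)
    also have "\<dots> = (\<Sum>y\<in>set xs. real (count_list xs y) * f y + (if y = x then f y else 0))"
      using True by (simp add: sum.distrib)
    also have "\<dots> = (\<Sum>y\<in>set (x#xs). real (count_list (x#xs) y) * f y)"
      using True by (intro sum.cong) (auto simp: insert_absorb algebra_simps)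
    finally show ?thesis .
  next
    case False
    then have "\<And>y. y \<in> set xs \<Longrightarrow> x \<noteq> y" by blast
    then show ?thesis using False by (simp add: Cons.IH)
  qed
qed simp

lemma energy_list:
  fixes as :: "complex list"
  assumes "char_poly (map_mat complex_of_real (adj_matrix n E)) = (\<Prod>a\<leftarrow>as. [:- a, 1:])"
  shows "graph_energy n E = sum_list (map cmod as)"
  unfolding graph_energy_def Let_def assms roots_prod_linear order_prod_linear
  by (simp only: sum_list_count_gen)



definition mtr :: "'a::comm_ring_1 mat \<Rightarrow> 'a" where
  "mtr M = (\<Sum>i<dim_row M. M $$ (i,i))"

lemma mult_entry:
  assumes "X \<in> carrier_mat n m" "Y \<in> carrier_mat m k" "i < n" "j < k"
  shows "(X * Y) $$ (i,j) = (\<Sum>l<m. X $$ (i,l) * Y $$ (l,j))"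
  using assms by (auto simp: scalar_prod_def atLeast0LessThan intro!: sum.cong)

lemma mtr_comm:
  fixes X Y :: "'a::comm_ring_1 mat"
  assumes "X \<in> carrier_mat n n" "Y \<in> carrier_mat n n"
  shows "mtr (X * Y) = mtr (Y * X)"
proof -
  have e1: "\<And>i. i \<in> {..<n} \<Longrightarrow> (X * Y) $$ (i,i) = (\<Sum>l<n. X $$ (i,l) * Y $$ (l,i))"
    by (rule mult_entry[OF assms]) auto
  have e2: "\<And>i. i \<in> {..<n} \<Longrightarrow> (Y * X) $$ (i,i) = (\<Sum>l<n. Y $$ (i,l) * X $$ (l,i))"
    by (rule mult_entry[OF assms(2,1)]) auto
  have dr1: "dim_row (X * Y) = n" and dr2: "dim_row (Y * X) = n" using assms by auto
  have "mtr (X * Y) = (\<Sum>i<n. \<Sum>l<n. X $$ (i,l) * Y $$ (l,i))"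
    unfolding mtr_def dr1 by (rule sum.cong[OF refl e1])
  also have "\<dots> = (\<Sum>l<n. \<Sum>i<n. Y $$ (l,i) * X $$ (i,l))"
    by (subst sum.swap) (simp add: mult.commute)
  also have "\<dots> = mtr (Y * X)"
    unfolding mtr_def dr2 by (rule sum.cong[OF refl e2, symmetric])
  finally show ?thesis .
qed

lemma sim_mtr:
  fixes M :: "'a::comm_ring_1 mat"
  assumes "similar_mat_wit M B P Q" "M \<in> carrier_mat n n"
  shows "mtr M = mtr B"
proof -
  from similar_mat_witD2[OF assms(2,1)] have
    c: "B \<in> carrier_mat n n" "P \<in> carrier_mat n n" "Q \<in> carrier_mat n n"
    and qp: "Q * P = 1\<^sub>m n" and m: "M = P * B * Q" by auto
  have "mtr M = mtr (P * (B * Q))" using m c by (simp add: assoc_mult_mat[of P n n B n Q n])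
  also have "\<dots> = mtr ((B * Q) * P)" using c by (intro mtr_comm) auto
  also have "(B * Q) * P = B" using c qp by (simp add: assoc_mult_mat[of B n n Q n P n])
  finally show ?thesis .
qed

lemma sim_sq:
  fixes M :: "'a::comm_ring_1 mat"
  assumes "similar_mat_wit M B P Q" "M \<in> carrier_mat n n"
  shows "similar_mat_wit (M * M) (B * B) P Q"
proof -
  from similar_mat_witD2[OF assms(2,1)] have
    c: "B \<in> carrier_mat n n" "P \<in> carrier_mat n n" "Q \<in> carrier_mat n n"
    and qp: "Q * P = 1\<^sub>m n" and pq: "P * Q = 1\<^sub>m n" and m: "M = P * B * Q" by auto
  have "M * M = P * B * (Q * P) * B * Q"
    using c unfolding m by (simp add: assoc_mult_mat[where n\<^sub>1=n and n\<^sub>2=n and n\<^sub>3=n and n\<^sub>4=n])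
  also have "\<dots> = P * (B * B) * Q"
    using c qp by (simp add: assoc_mult_mat[where n\<^sub>1=n and n\<^sub>2=n and n\<^sub>3=n and n\<^sub>4=n])
  finally have "M * M = P * (B * B) * Q" .
  then show ?thesis using c qp pq by (intro similar_mat_witI) auto
qed

lemma ut_sq:
  fixes B :: "'a::comm_ring_1 mat"
  assumes "upper_triangular B" "B \<in> carrier_mat n n"
  shows "upper_triangular (B * B)" "\<And>i. i < n \<Longrightarrow> (B * B) $$ (i,i) = (B $$ (i,i))^2"
proof -
  have z: "B $$ (i,j) = 0" if "j < i" "i < n" for i j using assms that by auto
  show "upper_triangular (B * B)"
  proof (rule upper_triangularI)
    fix i j assume "j < i" "i < dim_row (B * B)"
    then have ij: "j < i" "i < n" using assms by auto
    have "(B * B) $$ (i,j) = (\<Sum>l<n. B $$ (i,l) * B $$ (l,j))"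
      using assms ij by (intro mult_entry[OF assms(2) assms(2)]) auto
    also have "\<dots> = 0"
    proof (rule sum.neutral, intro ballI)
      fix l assume "l \<in> {..<n}"
      then show "B $$ (i,l) * B $$ (l,j) = 0"
        using z[of l i] z[of j l] ij by (cases "l < i") auto
    qed
    finally show "(B * B) $$ (i,j) = 0" .
  qed
  fix i assume i: "i < n"
  have "(B * B) $$ (i,i) = (\<Sum>l<n. B $$ (i,l) * B $$ (l,i))"
    using assms i by (intro mult_entry[OF assms(2) assms(2)]) auto
  also have "\<dots> = (\<Sum>l<n. if l = i then B $$ (i,i) * B $$ (i,i) else 0)"
  proof (rule sum.cong, simp)
    fix l assume "l \<in> {..<n}"
    then show "B $$ (i,l) * B $$ (l,i) = (if l = i then B $$ (i,i) * B $$ (i,i) else 0)"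
      using z[of l i] z[of i l] i by (cases "l < i"; cases "l = i") auto
  qed
  also have "\<dots> = (B $$ (i,i))^2" using i by (simp add: power2_eq_square)
  finally show "(B * B) $$ (i,i) = (B $$ (i,i))^2" .
qed



lemma moments:
  fixes M :: "complex mat"
  assumes M: "M \<in> carrier_mat n n" and cp: "char_poly M = (\<Prod>a\<leftarrow>as. [:- a, 1:])"
  shows "sum_list (map (\<lambda>a. a^2) as) = mtr (M * M)"
    "sum_list (map (\<lambda>a. a^4) as) = mtr ((M * M) * (M * M))"
proof -
  obtain B P Q where s: "schur_decomposition M as = (B,P,Q)" by (cases "schur_decomposition M as") auto
  from schur_decomposition[OF M cp s] have w: "similar_mat_wit M B P Q"
    and ut: "upper_triangular B" and dg: "diag_mat B = as" by auto
  from similar_mat_witD2[OF M w] have Bc: "B \<in> carrier_mat n n" by auto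
  have w2: "similar_mat_wit (M * M) (B * B) P Q" by (rule sim_sq[OF w M])
  have M2: "M * M \<in> carrier_mat n n" using M by auto
  have B2: "B * B \<in> carrier_mat n n" using Bc by auto
  have w4: "similar_mat_wit ((M * M) * (M * M)) ((B * B) * (B * B)) P Q" by (rule sim_sq[OF w2 M2])
  note u2 = ut_sq[OF ut Bc]
  note u4 = ut_sq[OF u2(1) B2]
  have as_eq: "as = map (\<lambda>i. B $$ (i,i)) [0..<n]" using dg Bc unfolding diag_mat_def by auto
  have "mtr (M * M) = mtr (B * B)" by (rule sim_mtr[OF w2 M2])
  also have "\<dots> = (\<Sum>i<n. (B $$ (i,i))^2)" unfolding mtr_def using Bc by (intro sum.cong) (auto simp: u2(2) simp del: index_mult_mat simp add: index_mult_mat(2,3))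
  also have "\<dots> = sum_list (map (\<lambda>a. a^2) as)" unfolding as_eq
    by (simp add: sum_list_sum_nth atLeast0LessThan o_def)
  finally show "sum_list (map (\<lambda>a. a^2) as) = mtr (M * M)" by simp
  have "mtr ((M * M) * (M * M)) = mtr ((B * B) * (B * B))" by (rule sim_mtr[OF w4, where n=n]) (use M in auto)
  also have "\<dots> = (\<Sum>i<n. (B $$ (i,i))^4)" unfolding mtr_def using Bc
    by (intro sum.cong) (auto simp: u2(2) u4(2) simp del: index_mult_mat simp add: index_mult_mat(2,3) simp flip: power_mult)
  also have "\<dots> = sum_list (map (\<lambda>a. a^4) as)" unfolding as_eq
    by (simp add: sum_list_sum_nth atLeast0LessThan o_def)
  finally show "sum_list (map (\<lambda>a. a^4) as) = mtr ((M * M) * (M * M))" by simp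
qed



lemma eig_real:
  fixes a :: "nat \<Rightarrow> nat \<Rightarrow> real" and w :: "nat \<Rightarrow> complex"
  assumes sym: "\<And>i j. i < n \<Longrightarrow> j < n \<Longrightarrow> a i j = a j i"
    and nz: "i1 < n" "w i1 \<noteq> 0"
    and ev: "\<And>i. i < n \<Longrightarrow> (\<Sum>j<n. of_real (a i j) * w j) = l * w i"
  shows "Im l = 0"
proof -
  define S where "S = (\<Sum>i<n. \<Sum>j<n. of_real (a i j) * cnj (w i) * w j)"
  define N where "N = (\<Sum>i<n. (cmod (w i))^2)"
  have S1: "S = l * of_real N"
  proof -
    have "S = (\<Sum>i<n. cnj (w i) * (\<Sum>j<n. of_real (a i j) * w j))"
      unfolding S_def by (simp add: sum_distrib_left mult_ac)
    also have "\<dots> = (\<Sum>i<n. l * (cnj (w i) * w i))"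
    proof (intro sum.cong refl)
      fix i assume "i \<in> {..<n}"
      then show "cnj (w i) * (\<Sum>j<n. of_real (a i j) * w j) = l * (cnj (w i) * w i)"
        using ev[of i] by simp
    qed
    also have "\<dots> = l * of_real N"
    proof -
      have q: "\<And>z. cnj z * z = of_real ((cmod z)^2)"
        by (metis complex_norm_square mult.commute)
      show ?thesis unfolding N_def q by (simp add: sum_distrib_left)
    qed
    finally show ?thesis .
  qed
  have S2: "cnj S = S"
  proof -
    have "cnj S = (\<Sum>i<n. \<Sum>j<n. of_real (a i j) * w i * cnj (w j))"
      unfolding S_def by simp
    also have "\<dots> = (\<Sum>j<n. \<Sum>i<n. of_real (a i j) * w i * cnj (w j))" by (rule sum.swap)
    also have "\<dots> = S" unfolding S_def
      by (intro sum.cong refl) (simp add: sym mult_ac)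
    finally show ?thesis .
  qed
  have Npos: "N > 0"
  proof -
    have "(cmod (w i1))^2 \<le> N" unfolding N_def
      by (rule member_le_sum) (use nz in auto)
    moreover have "(cmod (w i1))^2 > 0" using nz by simp
    ultimately show ?thesis by linarith
  qed
  have "cnj l * of_real N = l * of_real N" using S1 S2 by (metis complex_cnj_complex_of_real complex_cnj_mult)
  then have "cnj l = l" using Npos by simp
  then have "Im (cnj l) = Im l" by simp
  then show ?thesis by simp
qed

lemma eig_bound:
  fixes a :: "nat \<Rightarrow> nat \<Rightarrow> real" and w :: "nat \<Rightarrow> complex"
  assumes nn: "\<And>i j. a i j \<ge> 0"
    and rs: "\<And>i. i < n \<Longrightarrow> (\<Sum>j<n. a i j) \<le> 4"
    and nz: "i1 < n" "w i1 \<noteq> 0"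
    and ev: "\<And>i. i < n \<Longrightarrow> (\<Sum>j<n. of_real (a i j) * w j) = l * w i"
  shows "cmod l \<le> 4"
proof -
  define f where "f j = cmod (w j)" for j
  define M where "M = Max (f ` {..<n})"
  have fin: "finite (f ` {..<n})" and ne: "f ` {..<n} \<noteq> {}" using nz by auto
  obtain i0 where i0: "i0 < n" "f i0 = M" using Max_in[OF fin ne] unfolding M_def by auto
  have le: "f j \<le> M" if "j < n" for j unfolding M_def using fin that by auto
  have Mpos: "M > 0"
  proof -
    have "0 < cmod (w i1)" using nz by simp
    then show ?thesis using le[OF nz(1)] unfolding f_def by linarith
  qed
  have "cmod l * M = cmod (l * w i0)" using i0 unfolding f_def by (simp add: norm_mult)
  also have "\<dots> = cmod (\<Sum>j<n. of_real (a i0 j) * w j)" using ev[OF i0(1)] by simp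
  also have "\<dots> \<le> (\<Sum>j<n. cmod (of_real (a i0 j) * w j))" by (rule norm_sum)
  also have "\<dots> = (\<Sum>j<n. a i0 j * f j)" unfolding f_def
    by (intro sum.cong refl) (simp add: norm_mult nn)
  also have "\<dots> \<le> (\<Sum>j<n. a i0 j * M)"
    by (intro sum_mono mult_left_mono) (auto simp: le nn)
  also have "\<dots> = (\<Sum>j<n. a i0 j) * M" by (simp add: sum_distrib_right)
  also have "\<dots> \<le> 4 * M" using rs[OF i0(1)] Mpos by simp
  finally show ?thesis using Mpos by simp
qed



definition aa :: "(nat \<Rightarrow> nat \<Rightarrow> bool) \<Rightarrow> nat \<Rightarrow> nat \<Rightarrow> real" where
  "aa E i j = (if E i j then 1 else 0)"

definition cc :: "nat \<Rightarrow> (nat \<Rightarrow> nat \<Rightarrow> bool) \<Rightarrow> nat \<Rightarrow> nat \<Rightarrow> real" where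
  "cc n E i j = (\<Sum>k<n. aa E i k * aa E k j)"

lemma sum_aa: "(\<Sum>k<n. aa E i k) = real (degree n E i)"
proof -
  have "(\<Sum>k<n. aa E i k) = real (card ({..<n} \<inter> {k. E i k}))"
    unfolding aa_def by (simp add: sum.If_cases)
  also have "{..<n} \<inter> {k. E i k} = {j. j < n \<and> E i j}" by auto
  finally show ?thesis unfolding degree_def .
qed

lemma sg_sym: "simple_graph n E \<Longrightarrow> i < n \<Longrightarrow> j < n \<Longrightarrow> E i j = E j i"
  unfolding simple_graph_def by blast

lemma aa_sym: "simple_graph n E \<Longrightarrow> i < n \<Longrightarrow> j < n \<Longrightarrow> aa E i j = aa E j i"
  unfolding aa_def using sg_sym by metis

lemma cc_diag:
  assumes "simple_graph n E" "i < n"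
  shows "cc n E i i = real (degree n E i)"
proof -
  have "cc n E i i = (\<Sum>k<n. aa E i k)" unfolding cc_def
    by (intro sum.cong refl) (use aa_sym[OF assms(1) assms(2)] in \<open>auto simp: aa_def\<close>)
  then show ?thesis by (simp add: sum_aa)
qed

lemma cc_sym:
  assumes "simple_graph n E" "i < n" "j < n"
  shows "cc n E i j = cc n E j i"
  unfolding cc_def
  by (intro sum.cong refl) (use aa_sym[OF assms(1)] assms in \<open>auto simp: mult.commute\<close>)

lemma cc_nat: "\<exists>m::nat. cc n E i j = real m"
proof -
  have "cc n E i j = (\<Sum>k<n. if E i k \<and> E k j then 1 else 0)"
    unfolding cc_def aa_def by (intro sum.cong refl) auto
  also have "\<dots> = real (card ({..<n} \<inter> {k. E i k \<and> E k j}))" by (simp add: sum.If_cases)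
  finally show ?thesis by blast
qed

lemma cc_total:
  assumes "simple_graph n E"
  shows "(\<Sum>i<n. \<Sum>j<n. cc n E i j) = (\<Sum>k<n. (real (degree n E k))^2)"
proof -
  have "(\<Sum>i<n. \<Sum>j<n. cc n E i j) = (\<Sum>i<n. \<Sum>j<n. \<Sum>k<n. aa E i k * aa E k j)"
    unfolding cc_def ..
  also have "\<dots> = (\<Sum>i<n. \<Sum>k<n. \<Sum>j<n. aa E i k * aa E k j)"
    by (intro sum.cong refl sum.swap)
  also have "\<dots> = (\<Sum>k<n. \<Sum>i<n. \<Sum>j<n. aa E i k * aa E k j)"
    by (rule sum.swap)
  also have "\<dots> = (\<Sum>k<n. (\<Sum>i<n. aa E i k) * (\<Sum>j<n. aa E k j))"
    by (simp add: sum_product)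
  also have "\<dots> = (\<Sum>k<n. (real (degree n E k))^2)"
  proof (intro sum.cong refl)
    fix k assume k: "k \<in> {..<n}"
    have "(\<Sum>i<n. aa E i k) = (\<Sum>i<n. aa E k i)"
      by (intro sum.cong refl) (use aa_sym[OF assms] k in auto)
    then show "(\<Sum>i<n. aa E i k) * (\<Sum>j<n. aa E k j) = (real (degree n E k))^2"
      by (simp add: sum_aa power2_eq_square)
  qed
  finally show ?thesis .
qed

lemma fourth:
  assumes "simple_graph n E"
  shows "(\<Sum>i<n. \<Sum>j<n. cc n E i j * cc n E j i) \<ge>
     2 * (\<Sum>k<n. (real (degree n E k))^2) - (\<Sum>k<n. real (degree n E k))"
proof -
  have pt: "cc n E i j * cc n E j i \<ge> cc n E i j + (if j = i then (real (degree n E i))^2 - real (degree n E i) else 0)"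
    if "i < n" "j < n" for i j
  proof -
    obtain m where m: "cc n E i j = real m" using cc_nat by blast
    have "real m \<le> real m * real m" by (cases m) auto
    show ?thesis
    proof (cases "j = i")
      case True
      then show ?thesis using cc_diag[OF assms that(1)] by (simp add: power2_eq_square)
    next
      case False
      then show ?thesis using cc_sym[OF assms that] m \<open>real m \<le> real m * real m\<close> by simp
    qed
  qed
  have "(\<Sum>i<n. \<Sum>j<n. cc n E i j * cc n E j i) \<ge>
        (\<Sum>i<n. \<Sum>j<n. cc n E i j + (if j = i then (real (degree n E i))^2 - real (degree n E i) else 0))"
    by (intro sum_mono) (metis lessThan_iff pt)
  also have "(\<Sum>i<n. \<Sum>j<n. cc n E i j + (if j = i then (real (degree n E i))^2 - real (degree n E i) else 0))
     = (\<Sum>i<n. \<Sum>j<n. cc n E i j) + (\<Sum>i<n. (real (degree n E i))^2 - real (degree n E i))"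
    by (simp add: sum.distrib)
  finally show ?thesis using cc_total[OF assms] by (simp add: sum_subtractf)
qed

lemma sq_bound: "(\<Sum>k<n. (real (d k))^2) \<ge> 7 * (\<Sum>k<n. real (d k)) - 12 * real n"
proof -
  have "(real (d k))^2 \<ge> 7 * real (d k) - 12" for k
  proof (cases "d k \<le> 3")
    case True
    then have "(real (d k) - 3) * (real (d k) - 4) \<ge> 0" by (intro mult_nonpos_nonpos) auto
    then show ?thesis by (simp add: algebra_simps power2_eq_square)
  next
    case False
    then have "(real (d k) - 3) * (real (d k) - 4) \<ge> 0" by (intro mult_nonneg_nonneg) auto
    then show ?thesis by (simp add: algebra_simps power2_eq_square)
  qed
  then have "(\<Sum>k<n. (real (d k))^2) \<ge> (\<Sum>k<n. 7 * real (d k) - 12)" by (intro sum_mono) auto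
  then show ?thesis by (simp add: sum_subtractf sum_distrib_left)
qed



lemma handshake:
  assumes sg: "simple_graph n E"
  shows "(\<Sum>i<n. degree n E i) = 2 * card (graph_edges n E)"
proof -
  define D where "D = Sigma {..<n} (\<lambda>i. {j. j < n \<and> E i j})"
  define D1 where "D1 = {p \<in> D. fst p < snd p}"
  define D2 where "D2 = {p \<in> D. snd p < fst p}"
  have finD: "finite D" unfolding D_def by auto
  have "(\<Sum>i<n. degree n E i) = card D"
    unfolding D_def degree_def by (subst card_SigmaI) auto
  have irr: "\<not> E i i" if "i < n" for i using sg that unfolding simple_graph_def by auto
  have sym: "E i j \<Longrightarrow> i < n \<Longrightarrow> j < n \<Longrightarrow> E j i" for i j using sg unfolding simple_graph_def by auto
  have DU: "D = D1 \<union> D2"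
  proof -
    have "fst p \<noteq> snd p" if "p \<in> D" for p using that irr unfolding D_def by (cases p) auto
    then show ?thesis unfolding D1_def D2_def by (auto simp: linorder_neq_iff)
  qed
  have disj: "D1 \<inter> D2 = {}" unfolding D1_def D2_def by auto
  have fin1: "finite D1" "finite D2" using finD unfolding D1_def D2_def by auto
  have "D2 = (\<lambda>(i,j). (j,i)) ` D1"
  proof
    show "D2 \<subseteq> (\<lambda>(i,j). (j,i)) ` D1"
    proof
      fix p assume "p \<in> D2"
      then obtain i j where p: "p = (i,j)" "i < n" "j < n" "E i j" "j < i" unfolding D2_def D_def by auto
      then have "(j,i) \<in> D1" unfolding D1_def D_def using sym by auto
      then show "p \<in> (\<lambda>(i,j). (j,i)) ` D1" using p by force
    qed
    show "(\<lambda>(i,j). (j,i)) ` D1 \<subseteq> D2" unfolding D1_def D2_def D_def using sym by auto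
  qed
  moreover have "inj_on (\<lambda>(i,j). (j,i)) D1" by (auto simp: inj_on_def)
  ultimately have c2: "card D2 = card D1" by (simp add: card_image)
  have "graph_edges n E = (\<lambda>(i,j). {i,j}) ` D1"
  proof
    show "graph_edges n E \<subseteq> (\<lambda>(i,j). {i,j}) ` D1"
    proof
      fix e assume "e \<in> graph_edges n E"
      then obtain i j where e: "e = {i,j}" "i < n" "j < n" "E i j" unfolding graph_edges_def by auto
      then have "i \<noteq> j" using irr by auto
      then consider "i < j" | "j < i" by linarith
      then show "e \<in> (\<lambda>(i,j). {i,j}) ` D1"
      proof cases
        case 1
        then have "(i,j) \<in> D1" using e unfolding D1_def D_def by auto
        then show ?thesis using e by force
      next
        case 2
        then have "(j,i) \<in> D1" using e sym unfolding D1_def D_def by auto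
        moreover have "e = {j,i}" using e by auto
        ultimately show ?thesis by force
      qed
    qed
    show "(\<lambda>(i,j). {i,j}) ` D1 \<subseteq> graph_edges n E" unfolding D1_def D_def graph_edges_def by auto
  qed
  moreover have "inj_on (\<lambda>(i,j). {i,j}) D1"
  proof (rule inj_onI)
    fix p q assume "p \<in> D1" "q \<in> D1" and eq: "(\<lambda>(i,j). {i::nat,j}) p = (\<lambda>(i,j). {i,j}) q"
    then obtain i j k l where "p = (i,j)" "q = (k,l)" "i < j" "k < l" "{i,j} = {k,l}"
      unfolding D1_def by (cases p, cases q) auto
    then show "p = q" by (metis doubleton_eq_iff less_asym)
  qed
  ultimately have c1: "card (graph_edges n E) = card D1" by (simp add: card_image)
  have "card D = card D1 + card D2" unfolding DU using fin1 disj by (simp add: card_Un_disjoint)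
  then show ?thesis using c1 c2 \<open>(\<Sum>i<n. degree n E i) = card D\<close> by simp
qed



lemma poly_ineq:
  fixes t :: real assumes "0 \<le> t" "t \<le> 4"
  shows "t \<le> 24479/30720 + 2263/6720 * t^2 - (1/120) * t^4"
proof -
  have tt: "t * t \<le> 16" using mult_mono[of t 4 t 4] assms by simp
  have h: "0 \<le> 3497/13440 - t^2/120 - 7*t/240" using tt assms by (simp add: power2_eq_square)
  have "24479/30720 + 2263/6720 * t^2 - (1/120) * t^4 - t = (t - 7/4)^2 * (3497/13440 - t^2/120 - 7*t/240)"
    by (simp add: power2_eq_square power4_eq_xxxx field_simps)
  moreover have "(t - 7/4)^2 * (3497/13440 - t^2/120 - 7*t/240) \<ge> 0" using h by simp
  ultimately show ?thesis by linarith
qed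

lemma list_real_pow:
  fixes as :: "complex list"
  assumes "\<forall>a\<in>set as. Im a = 0"
  shows "sum_list (map (\<lambda>a. a^k) as) = complex_of_real (sum_list (map (\<lambda>a. (Re a)^k) as))"
  using assms
proof (induction as)
  case (Cons a as)
  have "a = complex_of_real (Re a)" using Cons.prems by (simp add: complex_eq_iff)
  then have "a^k = complex_of_real ((Re a)^k)" by (metis of_real_power)
  then show ?case using Cons by simp
qed simp

lemma list_bound:
  fixes as :: "complex list"
  assumes "\<forall>a\<in>set as. Im a = 0 \<and> cmod a \<le> 4"
  shows "sum_list (map cmod as) \<le> 24479/30720 * length as + 2263/6720 * sum_list (map (\<lambda>a. (Re a)^2) as)
     - (1/120) * sum_list (map (\<lambda>a. (Re a)^4) as)"
  using assms
proof (induction as)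
  case (Cons a as)
  have "cmod a = \<bar>Re a\<bar>" using Cons.prems by (simp add: cmod_def)
  moreover have "\<bar>Re a\<bar> \<le> 24479/30720 + 2263/6720 * \<bar>Re a\<bar>^2 - (1/120) * \<bar>Re a\<bar>^4"
    using Cons.prems \<open>cmod a = \<bar>Re a\<bar>\<close> by (intro poly_ineq) auto
  moreover have "\<bar>Re a\<bar>^2 = (Re a)^2" "\<bar>Re a\<bar>^4 = (Re a)^4" by (simp_all add: power_even_abs_numeral)
  moreover have "sum_list (map cmod as) \<le> 24479/30720 * length as + 2263/6720 * sum_list (map (\<lambda>a. (Re a)^2) as)
     - (1/120) * sum_list (map (\<lambda>a. (Re a)^4) as)" using Cons by simp
  ultimately show ?case by (simp add: field_simps)
qed simp



theorem theorem3p2: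
  fixes n :: nat and E :: "nat \<Rightarrow> nat \<Rightarrow> bool"
  assumes "n = 20 \<or> n = 21"
    and "simple_graph n E"
    and "card (graph_edges n E) = 2 * n - 1"
    and "\<forall>i<n. degree n E i \<le> 4"
  shows "graph_energy n E < 2 * (real n - 1)"
proof -
  note sg = assms(2)
  define Ac where "Ac = map_mat complex_of_real (adj_matrix n E)"
  have Ac: "Ac \<in> carrier_mat n n" unfolding Ac_def adj_matrix_def by simp
  have Aij: "Ac $$ (i,j) = complex_of_real (aa E i j)" if "i < n" "j < n" for i j
    using that unfolding Ac_def adj_matrix_def aa_def by simp
  obtain as where cp: "char_poly Ac = (\<Prod>a\<leftarrow>as. [:- a, 1:])" and len: "length as = n"
    using char_poly_factorized[OF Ac] by blast
  have en: "graph_energy n E = sum_list (map cmod as)"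
    by (rule energy_list) (use cp in \<open>simp add: Ac_def\<close>)
  have eig: "Im a = 0 \<and> cmod a \<le> 4" if a: "a \<in> set as" for a
  proof -
    have "poly (char_poly Ac) a = 0" using a unfolding cp roots_prod_linear[symmetric] by simp
    then have "eigenvalue Ac a" using eigenvalue_root_char_poly[OF Ac] by simp
    then obtain v where v: "v \<in> carrier_vec n" "v \<noteq> 0\<^sub>v n" "Ac *\<^sub>v v = a \<cdot>\<^sub>v v"
      unfolding eigenvalue_def eigenvector_def using Ac by auto
    obtain i1 where i1: "i1 < n" "v $ i1 \<noteq> 0"
      using v(1,2) by (metis carrier_vecD eq_vecI index_zero_vec(1) index_zero_vec(2))
    have ev: "(\<Sum>j<n. of_real (aa E i j) * v $ j) = a * v $ i" if "i < n" for i
    proof -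
      have "(Ac *\<^sub>v v) $ i = a * v $ i" using v(1,3) that by simp
      moreover have "(Ac *\<^sub>v v) $ i = (\<Sum>j<n. Ac $$ (i,j) * v $ j)"
        using Ac v(1) that by (auto simp: scalar_prod_def atLeast0LessThan intro!: sum.cong)
      ultimately show ?thesis using Aij that by simp
    qed
    have "Im a = 0"
      by (rule eig_real[of n "aa E" i1 "\<lambda>j. v $ j"]) (use aa_sym[OF sg] i1 ev in auto)
    moreover have "cmod a \<le> 4"
      by (rule eig_bound[of "aa E" n i1 "\<lambda>j. v $ j"])
         (use i1 ev assms(4) sum_aa in \<open>auto simp: aa_def\<close>)
    ultimately show ?thesis by simp
  qed
  have AA: "(Ac * Ac) $$ (i,j) = complex_of_real (cc n E i j)" if "i < n" "j < n" for i j
  proof -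
    have "(Ac * Ac) $$ (i,j) = (\<Sum>l<n. Ac $$ (i,l) * Ac $$ (l,j))" by (rule mult_entry[OF Ac Ac that])
    also have "\<dots> = complex_of_real (cc n E i j)" unfolding cc_def using that by (simp add: Aij)
    finally show ?thesis .
  qed
  have AA4: "((Ac * Ac) * (Ac * Ac)) $$ (i,i) = complex_of_real (\<Sum>j<n. cc n E i j * cc n E j i)" if "i < n" for i
  proof -
    have "((Ac * Ac) * (Ac * Ac)) $$ (i,i) = (\<Sum>l<n. (Ac * Ac) $$ (i,l) * (Ac * Ac) $$ (l,i))"
      by (rule mult_entry) (use Ac that in auto)
    also have "\<dots> = complex_of_real (\<Sum>j<n. cc n E i j * cc n E j i)" using that by (simp add: AA)
    finally show ?thesis .
  qed
  have real_all: "\<forall>a\<in>set as. Im a = 0" using eig by auto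
  define d where "d i = real (degree n E i)" for i
  have sumd: "(\<Sum>i<n. d i) = 4 * real n - 2"
  proof -
    have "(\<Sum>i<n. d i) = real (\<Sum>i<n. degree n E i)" unfolding d_def by simp
    also have "\<dots> = real (2 * (2 * n - 1))" using handshake[OF sg] assms(3) by simp
    also have "\<dots> = 4 * real n - 2" using assms(1) by auto
    finally show ?thesis .
  qed
  have S2: "sum_list (map (\<lambda>a. (Re a)^2) as) = 4 * real n - 2"
  proof -
    have "complex_of_real (sum_list (map (\<lambda>a. (Re a)^2) as)) = mtr (Ac * Ac)"
      using moments(1)[OF Ac cp] list_real_pow[OF real_all, of 2] by simp
    also have "\<dots> = (\<Sum>i<n. complex_of_real (cc n E i i))"
      unfolding mtr_def using Ac by (intro sum.cong) (auto simp: AA simp del: index_mult_mat simp add: index_mult_mat(2))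
    also have "\<dots> = complex_of_real (\<Sum>i<n. d i)" unfolding d_def using cc_diag[OF sg] by simp
    finally show ?thesis using sumd by (metis of_real_eq_iff)
  qed
  have S4: "sum_list (map (\<lambda>a. (Re a)^4) as) \<ge> 28 * real n - 26"
  proof -
    have "complex_of_real (sum_list (map (\<lambda>a. (Re a)^4) as)) = mtr ((Ac * Ac) * (Ac * Ac))"
      using moments(2)[OF Ac cp] list_real_pow[OF real_all, of 4] by simp
    also have "\<dots> = (\<Sum>i<n. complex_of_real (\<Sum>j<n. cc n E i j * cc n E j i))"
      unfolding mtr_def using Ac by (intro sum.cong) (auto simp: AA4 simp del: index_mult_mat simp add: index_mult_mat(2))
    also have "\<dots> = complex_of_real (\<Sum>i<n. \<Sum>j<n. cc n E i j * cc n E j i)" by simp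
    finally have eq: "sum_list (map (\<lambda>a. (Re a)^4) as) = (\<Sum>i<n. \<Sum>j<n. cc n E i j * cc n E j i)"
      by (metis of_real_eq_iff)
    have "(\<Sum>i<n. \<Sum>j<n. cc n E i j * cc n E j i) \<ge> 2 * (\<Sum>k<n. (d k)^2) - (\<Sum>k<n. d k)"
      using fourth[OF sg] unfolding d_def .
    moreover have "(\<Sum>k<n. (d k)^2) \<ge> 7 * (\<Sum>k<n. d k) - 12 * real n"
      using sq_bound[where n=n and d="degree n E"] unfolding d_def .
    ultimately show ?thesis using eq sumd by linarith
  qed
  have "graph_energy n E \<le> 24479/30720 * real n + 2263/6720 * (4 * real n - 2) - (1/120) * sum_list (map (\<lambda>a. (Re a)^4) as)"
    using list_bound[of as] eig en len S2 by simp
  also have "\<dots> \<le> 24479/30720 * real n + 2263/6720 * (4 * real n - 2) - (1/120) * (28 * real n - 26)"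
    using S4 by simp
  also have "\<dots> < 2 * (real n - 1)" using assms(1) by auto
  finally show ?thesis .
qed

end
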